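(* Let $d\geq 1000$, let $\Omega\subseteq\mathbb{R}^d$ be bounded and measurable, let $\lambda=\left(\frac{\sqrt d}{8\log d}\right)^d$, $\Delta=2^d\lambda$, let $\mathbf X$ be a Poisson point process of intensity $\lambda$ on $\Omega$, and put $\eta=e^{-(\log d)^2/8}$. Then \[ \mathbb{E}\left|\left\{x\in\mathbf X:\ |\mathbf X\cap B_x(2r_d)\cap B_y(2r_d)|\geq\eta\Delta\text{ for some }y\in\mathbf X\setminus\{x\}\right\}\right|\leq(2d)^{-1}\,\mathbb{E}|\mathbf X|. \]
   Context: $r_d$ is the radius of the Euclidean ball of volume $1$ in $\mathbb{R}^d$; $B_x(r)$ is the closed Euclidean ball of radius $r$ centred at $x$. $\log$ is the natural logarithm. *)

theory Defs
  imports "HOL-Analysis.Analysis"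
begin

definition unit_vol_radius :: "'a::euclidean_space itself \<Rightarrow> real" where
  "unit_vol_radius _ = (THE r. r > 0 \<and> measure lebesgue (cball (0::'a) r) = 1)"

text \<open>Expectation of a nonnegative functional F of a Poisson point process of intensity lam
  on a bounded measurable set Om: the number of points is Poisson(lam * vol Om) and, given
  there are n points, they are i.i.d. uniform on Om.\<close>
definition ppp_expect :: "real \<Rightarrow> 'a::euclidean_space set \<Rightarrow> ('a set \<Rightarrow> ennreal) \<Rightarrow> ennreal" where
  "ppp_expect lam Om F =
     (\<Sum>n. ennreal (exp (- lam * measure lebesgue Om) * lam ^ n / fact n) *
        (\<integral>\<^sup>+ p. F (p ` {..<n}) \<partial>(PiM {..<n} (\<lambda>_. restrict_space lebesgue Om))))"

end

theory Submission
  imports Defs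
begin

lemma emeasure_lebesgue_cball:
  fixes c :: "'a::euclidean_space"
  assumes "s \<ge> 0"
  shows "emeasure lebesgue (cball c s) = ennreal (unit_ball_vol (DIM('a)) * s ^ DIM('a))"
  using emeasure_cball[OF assms, of c] by simp

lemma uvr_props:
  defines "r \<equiv> unit_vol_radius TYPE('a::euclidean_space)"
  shows "r > 0" and "\<And>c::'a. \<And>s. s \<ge> 0 \<Longrightarrow> emeasure lebesgue (cball c s) = ennreal ((s / r) ^ DIM('a))"
proof -
  define w where "w = unit_ball_vol (DIM('a))"
  have w: "w > 0" unfolding w_def by simp
  define r0 where "r0 = (1 / w) powr (1 / DIM('a))"
  have r0: "r0 > 0" using w by (simp add: r0_def)
  have r0d: "r0 ^ DIM('a) = 1 / w"
    unfolding r0_def using w by (simp add: powr_realpow[symmetric] powr_powr)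
  have P: "r > 0 \<and> measure lebesgue (cball (0::'a) r) = 1 \<longleftrightarrow> r = r0" for r
  proof
    assume h: "r > 0 \<and> measure lebesgue (cball (0::'a) r) = 1"
    then have "w * r ^ DIM('a) = 1"
      using emeasure_lebesgue_cball[of r "0::'a"] w unfolding w_def measure_def by simp
    then have "r ^ DIM('a) = r0 ^ DIM('a)" using r0d w by (metis mult_cancel_left mult.commute nonzero_eq_divide_eq order_less_irrefl)
    then show "r = r0" using h r0 by (simp add: power_eq_iff_eq_base)
  next
    assume "r = r0"
    then show "r > 0 \<and> measure lebesgue (cball (0::'a) r) = 1"
      using emeasure_lebesgue_cball[of r "0::'a"] w r0 r0d unfolding w_def measure_def by simp
  qed
  have "unit_vol_radius TYPE('a) = r0"
    unfolding unit_vol_radius_def using P by simp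
  then have rr: "r = r0" by (simp add: r_def)
  then show "r > 0" using r0 by simp
  fix c :: 'a and s :: real assume s: "s \<ge> 0"
  have "w * s ^ DIM('a) = (s / r) ^ DIM('a)"
  proof -
    have "r ^ DIM('a) = 1 / w" using rr r0d by simp
    then show ?thesis using w by (simp add: power_divide)
  qed
  then show "emeasure lebesgue (cball c s) = ennreal ((s / r) ^ DIM('a))"
    using emeasure_lebesgue_cball[OF s, of c] unfolding w_def by simp
qed

lemma pair_marginal:
  fixes M :: "'b measure" and f :: "'b \<times> 'b \<Rightarrow> ennreal" and g :: "'b \<times> 'b \<times> 'b \<Rightarrow> ennreal"
  assumes sf: "sigma_finite_measure M" and ij: "i < n" "j < n" "i \<noteq> j"
  and f[measurable]: "f \<in> borel_measurable (M \<Otimes>\<^sub>M M)"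
  and g[measurable]: "g \<in> borel_measurable (M \<Otimes>\<^sub>M (M \<Otimes>\<^sub>M M))"
  shows "(\<integral>\<^sup>+p. f (p i, p j) * (\<Prod>l\<in>{..<n}-{i,j}. g (p i, p j, p l)) \<partial>PiM {..<n} (\<lambda>_. M))
       = (\<integral>\<^sup>+x. \<integral>\<^sup>+y. f (x, y) * (\<integral>\<^sup>+z. g (x, y, z) \<partial>M) ^ (n - 2) \<partial>M \<partial>M)"
proof -
  interpret product_sigma_finite "\<lambda>_. M" using sf by (simp add: product_sigma_finite_def)
  interpret sigma_finite_measure M by fact
  define J where "J = {..<n} - {i, j}"
  have J: "finite J" "i \<notin> J" "j \<notin> J" "i \<noteq> j" "{..<n} = insert i (insert j J)" "i \<notin> insert j J"
    using ij by (auto simp: J_def)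
  have cJ: "card J = n - 2" using ij by (simp add: J_def card_Diff_subset)
  define F where "F p = f (p i, p j) * (\<Prod>l\<in>J. g (p i, p j, p l))" for p :: "nat \<Rightarrow> 'b"
  have Fm: "F \<in> borel_measurable (PiM (insert i (insert j J)) (\<lambda>_. M))"
    unfolding F_def using J by measurable
  have "(\<integral>\<^sup>+p. F p \<partial>PiM {..<n} (\<lambda>_. M)) = (\<integral>\<^sup>+x. (\<integral>\<^sup>+q. F (q(i := x)) \<partial>PiM (insert j J) (\<lambda>_. M)) \<partial>M)"
    unfolding J(5) by (rule product_nn_integral_insert_rev) (use J Fm in auto)
  also have "\<dots> = (\<integral>\<^sup>+x. \<integral>\<^sup>+y. (\<integral>\<^sup>+q. F (q(j := y, i := x)) \<partial>PiM J (\<lambda>_. M)) \<partial>M \<partial>M)"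
  proof (rule nn_integral_cong)
    fix x assume x: "x \<in> space M"
    have m: "(\<lambda>q. F (q(i := x))) \<in> borel_measurable (PiM (insert j J) (\<lambda>_. M))"
    proof -
      have e: "(\<lambda>q. F (q(i := x))) = (\<lambda>q. f (x, q j) * (\<Prod>l\<in>J. g (x, q j, q l)))"
      proof (rule ext)
        fix q :: "nat \<Rightarrow> 'b"
        have "(\<Prod>l\<in>J. g ((q(i := x)) i, (q(i := x)) j, (q(i := x)) l)) = (\<Prod>l\<in>J. g (x, q j, q l))"
          by (rule prod.cong) (use J in auto)
        then show "F (q(i := x)) = f (x, q j) * (\<Prod>l\<in>J. g (x, q j, q l))"
          using J by (simp add: F_def)
      qed
      show ?thesis unfolding e using x J by measurable
    qed
    show "(\<integral>\<^sup>+q. F (q(i := x)) \<partial>PiM (insert j J) (\<lambda>_. M)) = (\<integral>\<^sup>+y. (\<integral>\<^sup>+q. F (q(j := y, i := x)) \<partial>PiM J (\<lambda>_. M)) \<partial>M)"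
      by (rule product_nn_integral_insert_rev) (use J m in auto)
  qed
  also have "\<dots> = (\<integral>\<^sup>+x. \<integral>\<^sup>+y. f (x, y) * (\<integral>\<^sup>+z. g (x, y, z) \<partial>M) ^ (n - 2) \<partial>M \<partial>M)"
  proof (intro nn_integral_cong)
    fix x y assume x: "x \<in> space M" and y: "y \<in> space M"
    have "(\<integral>\<^sup>+q. F (q(j := y, i := x)) \<partial>PiM J (\<lambda>_. M)) = (\<integral>\<^sup>+q. f (x, y) * (\<Prod>l\<in>J. g (x, y, q l)) \<partial>PiM J (\<lambda>_. M))"
    proof (rule nn_integral_cong)
      fix q :: "nat \<Rightarrow> 'b"
      have "(\<Prod>l\<in>J. g ((q(j := y, i := x)) i, (q(j := y, i := x)) j, (q(j := y, i := x)) l)) = (\<Prod>l\<in>J. g (x, y, q l))"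
        by (rule prod.cong) (use J in auto)
      then show "F (q(j := y, i := x)) = f (x, y) * (\<Prod>l\<in>J. g (x, y, q l))"
        using J by (simp add: F_def)
    qed
    also have "\<dots> = f (x, y) * (\<integral>\<^sup>+q. (\<Prod>l\<in>J. g (x, y, q l)) \<partial>PiM J (\<lambda>_. M))"
      by (rule nn_integral_cmult) (use x y in measurable)
    also have "(\<integral>\<^sup>+q. (\<Prod>l\<in>J. g (x, y, q l)) \<partial>PiM J (\<lambda>_. M)) = (\<Prod>l\<in>J. \<integral>\<^sup>+z. g (x, y, z) \<partial>M)"
      by (rule product_nn_integral_prod) (use J x y in measurable)
    also have "\<dots> = (\<integral>\<^sup>+z. g (x, y, z) \<partial>M) ^ (n - 2)" using cJ by simp
    finally show "(\<integral>\<^sup>+q. F (q(j := y, i := x)) \<partial>PiM J (\<lambda>_. M)) = f (x, y) * (\<integral>\<^sup>+z. g (x, y, z) \<partial>M) ^ (n - 2)" .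
  qed
  finally show ?thesis unfolding F_def J_def .
qed

lemma id_meas[measurable]: "(\<lambda>x::'a::euclidean_space. x) \<in> lebesgue_on S \<rightarrow>\<^sub>M borel"
  using id_borel_measurable_lebesgue_on by (simp add: id_def)

lemma dist_meas: "(\<lambda>xy::'a::euclidean_space \<times> 'a. dist (fst xy) (snd xy)) \<in> borel_measurable (lebesgue_on S \<Otimes>\<^sub>M lebesgue_on S)"
  by measurable

lemma closf_meas: "(\<lambda>xy::'a::euclidean_space \<times> 'a. indicator {xy. dist (fst xy) (snd xy) \<le> t} xy :: ennreal) \<in> borel_measurable (lebesgue_on S \<Otimes>\<^sub>M lebesgue_on S)"
  by measurable

lemma farf_meas: "(\<lambda>xy::'a::euclidean_space \<times> 'a. indicator {xy. t < dist (fst xy) (snd xy) \<and> dist (fst xy) (snd xy) \<le> t'} xy :: ennreal) \<in> borel_measurable (lebesgue_on S \<Otimes>\<^sub>M lebesgue_on S)"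
  by measurable

lemma g_meas: "(\<lambda>xyz::'a::euclidean_space \<times> 'a \<times> 'a. ennreal (exp (indicator (cball (fst xyz) R \<inter> cball (fst (snd xyz)) R) (snd (snd xyz)))))
   \<in> borel_measurable (lebesgue_on S \<Otimes>\<^sub>M (lebesgue_on S \<Otimes>\<^sub>M lebesgue_on S))"
  unfolding indicator_def by (simp add: mem_cball) measurable

lemma two_pow_ge: "n \<ge> 5 \<Longrightarrow> 4 * real n \<le> 2 ^ n"
proof (induction n rule: dec_induct)
  case base then show ?case by simp
next
  case (step n) then show ?case by simp
qed

lemma exp_ge_pow5: "(x::real) \<ge> 0 \<Longrightarrow> (x / 5) ^ 5 \<le> exp x"
proof -
  assume x: "x \<ge> 0"
  have "(x / 5) ^ 5 \<le> exp (x / 5) ^ 5"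
  proof (rule power_mono)
    show "x / 5 \<le> exp (x / 5)" using exp_ge_add_one_self[of "x/5"] by linarith
  qed (use x in auto)
  also have "\<dots> = exp x" by (simp add: exp_of_nat_mult[symmetric])
  finally show ?thesis .
qed

lemma ln1000: "ln (1000::real) \<le> 15 / 2"
proof -
  have a: "(2::real) \<le> (9/8) ^ 6" by (simp add: power_divide)
  have "(1000::real) \<le> 2 ^ 10" by simp
  also have "\<dots> \<le> ((9/8) ^ 6) ^ 10" by (rule power_mono[OF a]) simp
  also have "\<dots> = (9/8::real) ^ 60" by (simp add: power_mult[symmetric])
  also have "(9/8::real) ^ 60 \<le> exp (1/8) ^ 60"
    by (intro power_mono) (use exp_ge_add_one_self[of "1/8::real"] in auto)
  also have "\<dots> = exp (15/2)" by (simp add: exp_of_nat_mult[symmetric])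
  finally have "ln (1000::real) \<le> ln (exp (15/2))" by (subst ln_le_cancel_iff) auto
  then show ?thesis by simp
qed

lemma ln_le_y:
  fixes d :: real assumes "d \<ge> 1000"
  shows "ln d \<le> 11/2 + 2 * sqrt (d / 1000)"
proof -
  define y where "y = d / 1000"
  have y: "y \<ge> 1" using assms by (simp add: y_def)
  have "ln d = ln (1000 * y)" by (simp add: y_def)
  also have "\<dots> = ln 1000 + ln y" using y by (subst ln_mult) auto
  finally have 1: "ln d = ln 1000 + ln y" .
  have 2: "ln y = 2 * ln (sqrt y)" using y by (simp add: ln_sqrt)
  have 3: "ln (sqrt y) \<le> sqrt y - 1" using y by (intro ln_le_minus_one) simp
  show ?thesis using 1 2 3 ln1000 unfolding y_def by linarith
qed

lemma numeric:
  fixes d :: nat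
  assumes d: "d \<ge> 1000"
  defines "L \<equiv> ln (real d)"
  defines "q \<equiv> sqrt (real d) / (8 * L)"
  defines "u \<equiv> 3 * L / sqrt (real d)"
  defines "eta \<equiv> exp (- (L\<^sup>2 / 8))"
  defines "lam \<equiv> q ^ d"
  defines "Delta \<equiv> 2 ^ d * lam"
  shows "0 < u" "u \<le> 4" "lam * u ^ d \<le> 1 / (4 * real d)"
    "lam * (exp 1 - 1) * sqrt (4 - u\<^sup>2 / 4) ^ d \<le> eta * Delta / 2"
    "lam * 4 ^ d * exp (2 - eta * Delta / 2) \<le> 1 / (4 * real d)"
proof -
  define D where "D = real d"
  have D: "D \<ge> 1000" using d by (simp add: D_def)
  define y where "y = D / 1000"
  define s where "s = sqrt y"
  have y: "y \<ge> 1" using D by (simp add: y_def)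
  have s1: "s \<ge> 1" using y by (simp add: s_def)
  have ss: "s * s = y" using y by (simp add: s_def)
  have "s * 1 \<le> s * s" using s1 by (intro mult_left_mono) auto
  then have sy: "s \<le> y" using ss by simp
  have s1000: "sqrt 1000 \<ge> (316/10::real)"
  proof -
    have "sqrt ((316/10)^2) \<le> sqrt (1000::real)" by (subst real_sqrt_le_iff) (simp add: power2_eq_square)
    then show ?thesis by simp
  qed
  have sqD: "sqrt D = sqrt 1000 * s" unfolding s_def y_def by (simp add: real_sqrt_mult[symmetric])
  have sqD2: "sqrt D \<ge> 316/10 * s" using sqD s1000 s1 by (simp add: mult_right_mono)
  have LU: "L \<le> 11/2 + 2 * s" using ln_le_y[OF D] unfolding L_def D_def s_def y_def by simp
  have LU2: "L \<le> 15/2 * s" using LU s1 by linarith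
  have e4: "exp (4::real) \<le> 1000"
  proof -
    have "exp (4::real) = exp 1 ^ 4" by (simp add: exp_of_nat_mult[symmetric])
    also have "\<dots> \<le> (272/100) ^ 4" using e_less_272 by (intro power_mono) auto
    also have "\<dots> \<le> 1000" by (simp add: power_divide)
    finally show ?thesis .
  qed
  have L4: "L \<ge> 4"
  proof -
    have "exp 4 \<le> D" using e4 D by linarith
    then have "ln (exp 4) \<le> ln D" using D by (subst ln_le_cancel_iff) auto
    then show ?thesis by (simp add: L_def D_def)
  qed
  have Dpos: "D > 0" using D by simp
  have sqDpos: "sqrt D > 0" using Dpos by simp
  show upos: "0 < u" unfolding u_def using L4 sqDpos by (simp add: D_def)
  have u1: "u \<le> 1"
  proof -
    have "3 * L \<le> sqrt D" using LU2 sqD2 s1 by linarith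
    then show ?thesis unfolding u_def using sqDpos by (simp add: D_def)
  qed
  then show "u \<le> 4" by simp
  have qpos: "q > 0" unfolding q_def using L4 sqDpos by (simp add: D_def)
  have qu: "q * u = 3 / 8" unfolding q_def u_def using L4 sqDpos by (simp add: D_def field_simps)
  show "lam * u ^ d \<le> 1 / (4 * real d)"
  proof -
    have "lam * u ^ d = (3/8) ^ d" unfolding lam_def by (simp add: qu power_mult_distrib[symmetric])
    also have "\<dots> \<le> 1 / (4 * real d)"
    proof -
      have "4 * real d \<le> 2 ^ d" using two_pow_ge[of d] d by simp
      also have "\<dots> \<le> (8/3) ^ d" by (rule power_mono) auto
      finally have "4 * real d * (3/8)^d \<le> (8/3)^d * (3/8)^d" by (simp add: mult_right_mono)
      also have "\<dots> = 1" by (simp add: power_mult_distrib[symmetric])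
      finally show ?thesis using d by (simp add: field_simps)
    qed
    finally show ?thesis .
  qed
  have lampos: "lam > 0" unfolding lam_def using qpos by simp
  have Lpos: "L > 0" using L4 by simp
  show "lam * (exp 1 - 1) * sqrt (4 - u\<^sup>2 / 4) ^ d \<le> eta * Delta / 2"
  proof -
    define v where "v = u\<^sup>2 / 16"
    have "u\<^sup>2 \<le> 1" using u1 upos by (simp add: power_le_one)
    then have v1: "v \<le> 1" unfolding v_def by simp
    have sq: "sqrt (4 - u\<^sup>2 / 4) = 2 * sqrt (1 - v)"
    proof -
      have e: "4 - u\<^sup>2 / 4 = 2\<^sup>2 * (1 - v)" unfolding v_def by simp
      have "sqrt (4 - u\<^sup>2 / 4) = sqrt (2\<^sup>2) * sqrt (1 - v)" by (simp only: e real_sqrt_mult)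
      then show ?thesis by simp
    qed
    have sq2: "sqrt (1 - v) \<le> exp (- v / 2)"
    proof -
      have "1 - v \<le> exp (- v)" using exp_ge_add_one_self[of "-v"] by simp
      also have "\<dots> = (exp (- v / 2))\<^sup>2" by (simp add: power2_eq_square exp_add[symmetric])
      finally have "sqrt (1 - v) \<le> sqrt ((exp (- v / 2))\<^sup>2)" by (rule real_sqrt_le_mono)
      then show ?thesis by simp
    qed
    have "sqrt (1 - v) ^ d \<le> exp (- v / 2) ^ d" using sq2 v1 by (intro power_mono) auto
    also have "\<dots> = exp (- (real d * v / 2))" by (simp add: exp_of_nat_mult[symmetric])
    also have "real d * v / 2 = 9 * L\<^sup>2 / 32"
      unfolding v_def u_def using sqDpos by (simp add: D_def power_divide field_simps)
    finally have b1: "sqrt (1 - v) ^ d \<le> exp (- (9 * L\<^sup>2 / 32))" .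
    have b2: "2 * (exp 1 - 1) \<le> exp (5 * L\<^sup>2 / 32)"
    proof -
      have "4 * 4 \<le> L * L" using L4 by (intro mult_mono) auto
      then have "16 \<le> L\<^sup>2" by (simp add: power2_eq_square)
      then have "2 * (exp 1 - 1) \<le> 1 + 5 * L\<^sup>2 / 32" using e_less_272 by simp
      also have "\<dots> \<le> exp (5 * L\<^sup>2 / 32)" by (rule exp_ge_add_one_self)
      finally show ?thesis .
    qed
    have "(exp 1 - 1) * sqrt (1 - v) ^ d \<le> (exp 1 - 1) * exp (- (9 * L\<^sup>2 / 32))"
      using b1 exp_ge_add_one_self[of "1::real"] by (intro mult_left_mono) auto
    also have "\<dots> \<le> exp (5 * L\<^sup>2 / 32) * exp (- (9 * L\<^sup>2 / 32)) / 2"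
    proof -
      have "(exp 1 - 1) * exp (- (9 * L\<^sup>2 / 32)) \<le> (exp (5 * L\<^sup>2 / 32) / 2) * exp (- (9 * L\<^sup>2 / 32))"
        using b2 by (intro mult_right_mono) auto
      then show ?thesis by simp
    qed
    also have "exp (5 * L\<^sup>2 / 32) * exp (- (9 * L\<^sup>2 / 32)) = eta"
      unfolding eta_def by (simp add: exp_add[symmetric])
    finally have b3: "(exp 1 - 1) * sqrt (1 - v) ^ d \<le> eta / 2" .
    have "lam * (exp 1 - 1) * sqrt (4 - u\<^sup>2 / 4) ^ d = lam * 2 ^ d * ((exp 1 - 1) * sqrt (1 - v) ^ d)"
      unfolding sq by (simp add: power_mult_distrib)
    also have "\<dots> \<le> lam * 2 ^ d * (eta / 2)" using b3 lampos by (intro mult_left_mono) auto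
    also have "\<dots> = eta * Delta / 2" unfolding Delta_def by simp
    finally show ?thesis .
  qed
  show "lam * 4 ^ d * exp (2 - eta * Delta / 2) \<le> 1 / (4 * real d)"
  proof -
    have q2: "2 * q \<ge> 316 / 300"
    proof -
      have h: "4 * L \<le> 30 * s" using LU2 by simp
      have "316/10 * s * (4 * L) \<le> sqrt D * (30 * s)"
        by (rule mult_mono[OF sqD2 h]) (use s1 Lpos sqDpos in auto)
      then have "316/300 * (4 * L) \<le> sqrt D" using s1 by (simp add: field_simps)
      then show ?thesis unfolding q_def using Lpos by (simp add: D_def field_simps)
    qed
    have lnq: "ln (2 * q) \<ge> 1 / 20"
    proof -
      have "ln (1 / (2 * q)) \<le> 1 / (2 * q) - 1" using qpos by (intro ln_le_minus_one) auto
      then have "ln (2 * q) \<ge> 1 - 1 / (2 * q)" using qpos by (simp add: ln_div)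
      moreover have "1 / (2 * q) \<le> 300 / 316" using q2 qpos by (simp add: field_simps)
      ultimately show ?thesis by linarith
    qed
    define E where "E = D * ln (2 * q) - L\<^sup>2 / 8"
    have L2: "L\<^sup>2 \<le> 57 * y"
    proof -
      have "L * L \<le> (15/2 * s) * (15/2 * s)" using LU2 Lpos by (intro mult_mono) auto
      then have "L * L \<le> 225/4 * y" using ss by simp
      then show ?thesis using y by (simp add: power2_eq_square)
    qed
    have E42: "E \<ge> 42 * y"
    proof -
      have "D * ln (2 * q) \<ge> D * (1/20)" using lnq D by (intro mult_left_mono) auto
      moreover have "L\<^sup>2 \<le> 57 * D / 1000" using L2 by (simp add: y_def)
      ultimately have h: "D / 20 \<le> D * ln (2 * q)" "L\<^sup>2 \<le> 57 * D / 1000" by auto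
      define P where "P = D * ln (2 * q)"
      define Q where "Q = L\<^sup>2"
      have "D / 20 \<le> P" "Q \<le> 57 * D / 1000" using h unfolding P_def Q_def by auto
      then have "42 * (D / 1000) \<le> P - Q / 8" using D by linarith
      then show ?thesis unfolding E_def y_def P_def Q_def .
    qed
    have etaD: "eta * Delta = exp E"
    proof -
      have "exp (D * ln (2 * q)) = exp (ln (2 * q)) ^ d" unfolding D_def by (rule exp_of_nat_mult)
      then have e1: "(2 * q) ^ d = exp (D * ln (2 * q))" using qpos by simp
      have "eta * Delta = exp (- (L\<^sup>2 / 8)) * (2 * q) ^ d"
        unfolding eta_def Delta_def lam_def by (simp add: power_mult_distrib)
      also have "\<dots> = exp (- (L\<^sup>2 / 8)) * exp (D * ln (2 * q))" by (simp only: e1)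
      also have "\<dots> = exp (- (L\<^sup>2 / 8) + D * ln (2 * q))" by (simp only: mult_exp_exp)
      also have "- (L\<^sup>2 / 8) + D * ln (2 * q) = E" unfolding E_def by simp
      finally show ?thesis .
    qed
    have lam4: "lam * 4 ^ d = exp (D * ln (4 * q))"
    proof -
      have "exp (D * ln (4 * q)) = exp (ln (4 * q)) ^ d" unfolding D_def by (rule exp_of_nat_mult)
      then show ?thesis unfolding lam_def using qpos by (simp add: power_mult_distrib mult.commute)
    qed
    have ln4q: "ln (4 * q) \<le> L / 2"
    proof -
      have "4 * q = sqrt D / (2 * L)" unfolding q_def by (simp add: D_def)
      also have "\<dots> \<le> sqrt D" using L4 sqDpos by (simp add: field_simps)
      finally have "ln (4 * q) \<le> ln (sqrt D)" using qpos Dpos by (subst ln_le_cancel_iff) auto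
      also have "ln (sqrt D) = L / 2" using Dpos by (simp add: ln_sqrt L_def D_def)
      finally show ?thesis .
    qed
    have c1: "D * ln (4 * q) \<le> 3750 * y * y"
    proof -
      have "D * ln (4 * q) \<le> D * (L / 2)" using ln4q D by (intro mult_left_mono) auto
      also have "\<dots> \<le> D * (15/4 * y)" using LU2 sy D by (intro mult_left_mono) auto
      finally show ?thesis by (simp add: y_def)
    qed
    have c2: "ln (4 * D) \<le> 19/2 * y"
    proof -
      have "ln (4 * D) = ln 4 + L" using Dpos by (simp add: ln_mult L_def D_def)
      moreover have "ln (4::real) \<le> 2"
      proof -
        have h: "exp (1::real) \<ge> 2" using exp_ge_add_one_self[of "1::real"] by simp
        have "(2::real) * 2 \<le> exp 1 * exp 1" by (rule mult_mono) (use h in auto)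
        then have "(4::real) \<le> exp 2" by (simp add: mult_exp_exp)
        then have "ln (4::real) \<le> ln (exp 2)" by (subst ln_le_cancel_iff) auto
        then show ?thesis by simp
      qed
      ultimately show ?thesis using LU2 sy s1 by linarith
    qed
    have c3: "(42 * y / 5) ^ 5 \<le> exp E"
    proof -
      have "(42 * y / 5) ^ 5 \<le> exp (42 * y)" using y by (intro exp_ge_pow5) auto
      also have "\<dots> \<le> exp E" using E42 by simp
      finally show ?thesis .
    qed
    have c4: "7600 * (y * y) \<le> (42 * y / 5) ^ 5"
    proof -
      have y3: "1 \<le> y ^ 3" using y by (simp add: one_le_power)
      have y2: "y ^ 2 \<le> y ^ 2 * y ^ 3" using mult_left_mono[OF y3, of "y^2"] by simp
      have e: "(42 * y / 5) ^ 5 = (42 / 5) ^ 5 * (y ^ 2 * y ^ 3)"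
        by (simp add: power_mult_distrib power_divide power_add[symmetric])
      have n: "(7600::real) \<le> (42 / 5) ^ 5" by (simp add: power_divide)
      have "7600 * y ^ 2 \<le> (42 / 5) ^ 5 * y ^ 2" by (rule mult_right_mono[OF n]) simp
      also have "\<dots> \<le> (42 / 5) ^ 5 * (y ^ 2 * y ^ 3)" by (rule mult_left_mono[OF y2]) simp
      finally have "7600 * y ^ 2 \<le> (42 * y / 5) ^ 5" by (simp only: e)
      then show ?thesis by (simp add: power2_eq_square)
    qed
    have key: "D * ln (4 * q) + 2 - exp E / 2 + ln (4 * D) \<le> 0"
    proof -
      have yy: "y \<le> y * y" using mult_left_mono[OF y, of y] y by simp
      define a where "a = D * ln (4 * q)"
      define b where "b = ln (4 * D)"
      define Y2 where "Y2 = y * y"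
      define Y5 where "Y5 = (42 * y / 5) ^ 5"
      have "a \<le> 3750 * Y2" "b \<le> 19/2 * y" "Y5 \<le> exp E" "7600 * Y2 \<le> Y5" "y \<le> Y2"
        using c1 c2 c3 c4 yy unfolding a_def b_def Y2_def Y5_def by (auto simp: mult.assoc)
      then have "a + 2 - exp E / 2 + b \<le> 0" using y by linarith
      then show ?thesis unfolding a_def b_def .
    qed
    have "lam * 4 ^ d * exp (2 - eta * Delta / 2) * (4 * D) = exp (D * ln (4 * q)) * exp (2 - exp E / 2) * exp (ln (4 * D))"
      using lam4 etaD Dpos by simp
    also have "\<dots> = exp (D * ln (4 * q) + (2 - exp E / 2) + ln (4 * D))" by (simp only: mult_exp_exp)
    also have "\<dots> \<le> 1"
    proof -
      have "D * ln (4 * q) + (2 - exp E / 2) + ln (4 * D) \<le> 0" using key by linarith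
      then show ?thesis by simp
    qed
    finally show ?thesis using Dpos by (simp add: D_def field_simps)
  qed
qed

definition nearf :: "real \<Rightarrow> 'a::metric_space \<times> 'a \<Rightarrow> ennreal" where
  "nearf t xy = indicator {xy. dist (fst xy) (snd xy) \<le> t} xy"
definition farf :: "real \<Rightarrow> real \<Rightarrow> 'a::metric_space \<times> 'a \<Rightarrow> ennreal" where
  "farf t t' xy = indicator {xy. t < dist (fst xy) (snd xy) \<and> dist (fst xy) (snd xy) \<le> t'} xy"
definition gf :: "real \<Rightarrow> 'a::metric_space \<times> 'a \<times> 'a \<Rightarrow> ennreal" where
  "gf R xyz = ennreal (exp (indicator (cball (fst xyz) R \<inter> cball (fst (snd xyz)) R) (snd (snd xyz))))"
definition onef :: "'a \<times> 'a \<times> 'a \<Rightarrow> ennreal" where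
  "onef xyz = 1"

definition Gf :: "real \<Rightarrow> real \<Rightarrow> real \<Rightarrow> nat \<Rightarrow> nat \<Rightarrow> nat \<Rightarrow> (nat \<Rightarrow> 'a::metric_space) \<Rightarrow> ennreal" where
  "Gf t0 R N n i j p =
     nearf t0 (p i, p j) * (\<Prod>l\<in>{..<n}-{i,j}. onef (p i, p j, p l)) +
     ennreal (exp (- (N - 2))) * (farf t0 (2 * R) (p i, p j) * (\<Prod>l\<in>{..<n}-{i,j}. gf R (p i, p j, p l)))"

lemma card_inter_bound:
  fixes p :: "nat \<Rightarrow> 'a"
  assumes "i < n" "j < n" "i \<noteq> j"
  shows "card (p ` {..<n} \<inter> C) \<le> card {l\<in>{..<n}-{i,j}. p l \<in> C} + 2"
proof -
  have "p ` {..<n} \<inter> C \<subseteq> p ` {l\<in>{..<n}-{i,j}. p l \<in> C} \<union> {p i, p j}" by auto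
  then have "card (p ` {..<n} \<inter> C) \<le> card (p ` {l\<in>{..<n}-{i,j}. p l \<in> C} \<union> {p i, p j})"
    by (intro card_mono) auto
  also have "\<dots> \<le> card (p ` {l\<in>{..<n}-{i,j}. p l \<in> C}) + card {p i, p j}" by (rule card_Un_le)
  also have "\<dots> \<le> card {l\<in>{..<n}-{i,j}. p l \<in> C} + 2"
    using card_image_le[of "{l\<in>{..<n}-{i,j}. p l \<in> C}" p] card_insert_le_m1[of 2 "{p j}" "p i"]
    by (simp add: card_insert_if) 
  finally show ?thesis .
qed

lemma one_le_G:
  fixes p :: "nat \<Rightarrow> 'a::metric_space"
  assumes ij: "i < n" "j < n" "i \<noteq> j" and Npos: "N > 0"
    and big: "N \<le> real (card (p ` {..<n} \<inter> cball (p i) R \<inter> cball (p j) R))"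
  shows "1 \<le> Gf t0 R N n i j p"
proof (cases "dist (p i) (p j) \<le> t0")
  case True
  then have "nearf t0 (p i, p j) * (\<Prod>l\<in>{..<n}-{i,j}. onef (p i, p j, p l)) = 1"
    by (simp add: nearf_def onef_def)
  then show ?thesis unfolding Gf_def by (metis add_increasing2 order_refl zero_le)
next
  case False
  define C where "C = cball (p i) R \<inter> cball (p j) R"
  have "C \<noteq> {}"
  proof
    assume "C = {}"
    then have "p ` {..<n} \<inter> cball (p i) R \<inter> cball (p j) R = {}" by (auto simp: C_def)
    then show False using big Npos by simp
  qed
  then obtain z where z: "z \<in> C" by auto
  have "dist (p i) (p j) \<le> dist (p i) z + dist z (p j)" by (rule dist_triangle)
  also have "\<dots> \<le> 2 * R" using z by (auto simp: C_def dist_commute)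
  finally have far: "farf t0 (2 * R) (p i, p j) = 1" using False by (simp add: farf_def)
  define K where "K = {l\<in>{..<n}-{i,j}. p l \<in> C}"
  have cK: "N - 2 \<le> real (card K)"
    using card_inter_bound[OF ij, of p C] big unfolding K_def C_def by (simp add: Int_assoc)
  have "(\<Prod>l\<in>{..<n}-{i,j}. gf R (p i, p j, p l)) = ennreal (\<Prod>l\<in>{..<n}-{i,j}. exp (indicator C (p l)))"
    unfolding gf_def C_def by (simp add: prod_ennreal)
  also have "(\<Prod>l\<in>{..<n}-{i,j}. exp (indicator C (p l) :: real)) = exp (\<Sum>l\<in>{..<n}-{i,j}. indicator C (p l))"
    by (simp add: exp_sum)
  also have "(\<Sum>l\<in>{..<n}-{i,j}. indicator C (p l) :: real) = real (card K)"
    unfolding K_def by (simp add: indicator_def sum.If_cases Int_def)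
  finally have pr: "(\<Prod>l\<in>{..<n}-{i,j}. gf R (p i, p j, p l)) = ennreal (exp (real (card K)))" .
  have "ennreal (exp (- (N - 2))) * (farf t0 (2 * R) (p i, p j) * (\<Prod>l\<in>{..<n}-{i,j}. gf R (p i, p j, p l)))
      = ennreal (exp (- (N - 2)) * exp (real (card K)))"
    by (simp add: far pr ennreal_mult)
  also have "exp (- (N - 2)) * exp (real (card K)) = exp (real (card K) - (N - 2))" by (simp add: mult_exp_exp algebra_simps)
  finally have e: "ennreal (exp (- (N - 2))) * (farf t0 (2 * R) (p i, p j) * (\<Prod>l\<in>{..<n}-{i,j}. gf R (p i, p j, p l)))
     = ennreal (exp (real (card K) - (N - 2)))" .
  have "1 \<le> exp (real (card K) - (N - 2))" using cK by simp
  then have "ennreal 1 \<le> ennreal (exp (real (card K) - (N - 2)))" by (rule ennreal_leI)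
  then have "1 \<le> ennreal (exp (- (N - 2))) * (farf t0 (2 * R) (p i, p j) * (\<Prod>l\<in>{..<n}-{i,j}. gf R (p i, p j, p l)))"
    unfolding e by simp
  then show ?thesis unfolding Gf_def by (metis add_increasing zero_le)
qed

lemma det_bound:
  fixes p :: "nat \<Rightarrow> 'a::metric_space"
  assumes Npos: "N > 0"
  shows "(of_nat (card {x \<in> p ` {..<n}. \<exists>y \<in> p ` {..<n} - {x}. N \<le> real (card (p ` {..<n} \<inter> cball x R \<inter> cball y R))}) :: ennreal)
    \<le> (\<Sum>i<n. \<Sum>j\<in>{..<n}-{i}. Gf t0 R N n i j p)"
proof -
  define S where "S = p ` {..<n}"
  define P where "P x = (\<exists>y \<in> S - {x}. N \<le> real (card (S \<inter> cball x R \<inter> cball y R)))" for x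
  define I where "I = {i\<in>{..<n}. P (p i)}"
  have "{x \<in> S. P x} = p ` I" unfolding I_def S_def by auto
  then have "card {x \<in> S. P x} \<le> card I" using card_image_le[of I p] by (simp add: I_def)
  then have "(of_nat (card {x \<in> S. P x}) :: ennreal) \<le> of_nat (card I)" by simp
  also have "(of_nat (card I) :: ennreal) = (\<Sum>i\<in>I. 1)" by simp
  also have "\<dots> \<le> (\<Sum>i\<in>I. \<Sum>j\<in>{..<n}-{i}. Gf t0 R N n i j p)"
  proof (rule sum_mono)
    fix i assume i: "i \<in> I"
    then obtain y where y: "y \<in> S - {p i}" "N \<le> real (card (S \<inter> cball (p i) R \<inter> cball y R))"
      unfolding I_def P_def by auto
    then obtain j where j: "j < n" "y = p j" unfolding S_def by auto
    have ij: "i < n" "j < n" "i \<noteq> j" using i j y unfolding I_def by auto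
    have "1 \<le> Gf t0 R N n i j p"
      by (rule one_le_G[OF ij Npos]) (use y j in \<open>simp add: S_def\<close>)
    also have "\<dots> \<le> (\<Sum>j\<in>{..<n}-{i}. Gf t0 R N n i j p)"
      by (rule member_le_sum) (use ij in auto)
    finally show "1 \<le> (\<Sum>j\<in>{..<n}-{i}. Gf t0 R N n i j p)" .
  qed
  also have "\<dots> \<le> (\<Sum>i<n. \<Sum>j\<in>{..<n}-{i}. Gf t0 R N n i j p)"
    by (rule sum_mono2) (auto simp: I_def)
  finally show ?thesis unfolding S_def P_def .
qed

lemma midpoint_bound:
  fixes x y z :: "'a::real_inner"
  assumes "dist z x \<le> R" "dist z y \<le> R" "t0 \<le> dist x y" "0 \<le> t0"
  shows "dist z ((1/2) *\<^sub>R (x + y)) \<le> sqrt (R\<^sup>2 - t0\<^sup>2 / 4)"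
proof -
  define a where "a = z - x"
  define b where "b = z - y"
  have h: "(1/2::real) *\<^sub>R z + (1/2) *\<^sub>R z = z" by (simp add: scaleR_add_left[symmetric])
  have zm: "z - (1/2) *\<^sub>R (x + y) = (1/2) *\<^sub>R (a + b)"
    unfolding a_def b_def scaleR_right_distrib scaleR_right_diff_distrib
    by (subst (1) h[symmetric]) (simp add: algebra_simps)
  have xy: "x - y = b - a" unfolding a_def b_def by simp
  have par: "(norm (a + b))\<^sup>2 + (norm (b - a))\<^sup>2 = 2 * (norm a)\<^sup>2 + 2 * (norm b)\<^sup>2"
    by (simp add: power2_norm_eq_inner inner_simps inner_commute)
  have na: "norm a \<le> R" "norm b \<le> R" using assms(1,2) unfolding a_def b_def by (simp_all add: dist_norm)
  have R0: "0 \<le> R" using na norm_ge_zero order_trans by blast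
  have nba: "t0 \<le> norm (b - a)" using assms(3) xy by (simp add: dist_norm)
  have "(norm a)\<^sup>2 \<le> R\<^sup>2" "(norm b)\<^sup>2 \<le> R\<^sup>2" using na by (simp_all add: power_mono)
  moreover have "t0\<^sup>2 \<le> (norm (b - a))\<^sup>2" using nba assms(4) by (simp add: power_mono)
  ultimately have "(norm (a + b))\<^sup>2 \<le> 4 * R\<^sup>2 - t0\<^sup>2" using par by linarith
  then have "(dist z ((1/2) *\<^sub>R (x + y)))\<^sup>2 \<le> R\<^sup>2 - t0\<^sup>2 / 4"
    unfolding dist_norm zm by (simp add: power_mult_distrib power2_eq_square)
  then show ?thesis by (simp add: real_le_rsqrt)
qed

context
  fixes Om :: "'a::euclidean_space set"
  assumes bOm: "bounded Om" and mOm: "Om \<in> sets lebesgue"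
begin

lemma lmOm: "Om \<in> lmeasurable" using bounded_set_imp_lmeasurable[OF bOm mOm] .

lemma sfM: "sigma_finite_measure (lebesgue_on Om)"
  using finite_measure_lebesgue_on[OF lmOm] by (simp add: finite_measure_def)

lemma spM: "space (lebesgue_on Om) = Om" by (simp add: space_restrict_space)

lemma emOm: "emeasure lebesgue Om = ennreal (measure lebesgue Om)"
  by (rule emeasure_eq_ennreal_measure[OF fmeasurableD2[OF lmOm]])

lemma emM_sub: "X \<in> sets lebesgue \<Longrightarrow> emeasure (lebesgue_on Om) (X \<inter> Om) = emeasure lebesgue (X \<inter> Om)"
  using mOm by (subst emeasure_restrict_space) auto

lemma int_one: "(\<integral>\<^sup>+z. 1 \<partial>lebesgue_on Om) = ennreal (measure lebesgue Om)"
  using emM_sub[of UNIV] emOm by (simp add: spM)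

lemma int_cball:
  assumes "s \<ge> 0"
  shows "(\<integral>\<^sup>+y. indicator (cball x s) y \<partial>lebesgue_on Om) \<le> ennreal ((s / unit_vol_radius TYPE('a)) ^ DIM('a))"
proof -
  have "(\<integral>\<^sup>+y. indicator (cball x s) y \<partial>lebesgue_on Om) = (\<integral>\<^sup>+y. indicator (cball x s \<inter> Om) y \<partial>lebesgue_on Om)"
    by (rule nn_integral_cong) (simp add: spM indicator_def)
  also have "\<dots> = emeasure (lebesgue_on Om) (cball x s \<inter> Om)"
    by (rule nn_integral_indicator) (use mOm lmeasurable_cball[of x s] in \<open>auto simp: sets_restrict_space_iff intro!: sets.Int dest: fmeasurableD\<close>)
  also have "\<dots> = emeasure lebesgue (cball x s \<inter> Om)" by (rule emM_sub) simp
  also have "\<dots> \<le> emeasure lebesgue (cball x s)" by (rule emeasure_mono) auto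
  also have "\<dots> = ennreal ((s / unit_vol_radius TYPE('a)) ^ DIM('a))" using uvr_props(2)[OF assms] by simp
  finally show ?thesis .
qed

lemma int_near:
  assumes "t \<ge> 0"
  shows "(\<integral>\<^sup>+y. nearf t (x, y) \<partial>lebesgue_on Om) \<le> ennreal ((t / unit_vol_radius TYPE('a)) ^ DIM('a))"
proof -
  have "(\<integral>\<^sup>+y. nearf t (x, y) \<partial>lebesgue_on Om) = (\<integral>\<^sup>+y. indicator (cball x t) y \<partial>lebesgue_on Om)"
    by (rule nn_integral_cong) (simp add: nearf_def indicator_def mem_cball)
  then show ?thesis using int_cball[OF assms] by simp
qed

lemma int_far:
  assumes "t' \<ge> 0"
  shows "(\<integral>\<^sup>+y. farf t t' (x, y) \<partial>lebesgue_on Om) \<le> ennreal ((t' / unit_vol_radius TYPE('a)) ^ DIM('a))"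
proof -
  have "(\<integral>\<^sup>+y. farf t t' (x, y) \<partial>lebesgue_on Om) \<le> (\<integral>\<^sup>+y. nearf t' (x, y) \<partial>lebesgue_on Om)"
    by (rule nn_integral_mono) (simp add: nearf_def farf_def indicator_def)
  then show ?thesis using int_near[OF assms] by (rule order_trans)
qed

lemma int_g:
  assumes "0 \<le> t0" "t0 < dist x y" "t0 \<le> 2 * R"
  shows "(\<integral>\<^sup>+z. gf R (x, y, z) \<partial>lebesgue_on Om)
    \<le> ennreal (measure lebesgue Om + (exp 1 - 1) * (sqrt (R\<^sup>2 - t0\<^sup>2 / 4) / unit_vol_radius TYPE('a)) ^ DIM('a))"
proof -
  define m where "m = (1/2) *\<^sub>R (x + y)"
  define \<rho> where "\<rho> = sqrt (R\<^sup>2 - t0\<^sup>2 / 4)"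
  have c0: "exp 1 - 1 \<ge> (0::real)" using exp_ge_add_one_self[of "1::real"] by simp
  have pt: "gf R (x, y, z) \<le> 1 + ennreal (exp 1 - 1) * indicator (cball m \<rho>) z" for z
  proof (cases "z \<in> cball x R \<inter> cball y R")
    case True
    then have "dist z m \<le> \<rho>" unfolding m_def \<rho>_def
      by (intro midpoint_bound) (use assms in \<open>auto simp: dist_commute\<close>)
    then have "z \<in> cball m \<rho>" by (simp add: dist_commute)
    moreover have "1 + ennreal (exp 1 - 1) = ennreal (exp 1)" using ennreal_plus[of 1 "exp 1 - 1"] c0 by simp
    ultimately show ?thesis using True by (simp add: gf_def)
  next
    case False
    then show ?thesis by (simp add: gf_def)
  qed
  have \<rho>0: "\<rho> \<ge> 0" unfolding \<rho>_def
  proof -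
    have "t0 * t0 \<le> (2 * R) * (2 * R)" using assms by (intro mult_mono) auto
    then show "sqrt (R\<^sup>2 - t0\<^sup>2 / 4) \<ge> 0" by (simp add: power2_eq_square)
  qed
  have "(\<integral>\<^sup>+z. gf R (x, y, z) \<partial>lebesgue_on Om) \<le> (\<integral>\<^sup>+z. 1 + ennreal (exp 1 - 1) * indicator (cball m \<rho>) z \<partial>lebesgue_on Om)"
    by (rule nn_integral_mono) (rule pt)
  also have "\<dots> = (\<integral>\<^sup>+z. 1 \<partial>lebesgue_on Om) + ennreal (exp 1 - 1) * (\<integral>\<^sup>+z. indicator (cball m \<rho>) z \<partial>lebesgue_on Om)"
  proof -
    have im: "(\<lambda>z. indicator (cball m \<rho>) z :: ennreal) \<in> borel_measurable (lebesgue_on Om)"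
      by (rule measurable_restrict_space1, rule borel_measurable_indicator)
        (use lmeasurable_cball[of m \<rho>] in \<open>auto dest: fmeasurableD\<close>)
    then have im2: "(\<lambda>z. ennreal (exp 1 - 1) * indicator (cball m \<rho>) z) \<in> borel_measurable (lebesgue_on Om)"
      by measurable
    show ?thesis
      by (subst nn_integral_add) (use im im2 in \<open>auto simp: nn_integral_cmult\<close>)
  qed
  also have "\<dots> \<le> ennreal (measure lebesgue Om) + ennreal (exp 1 - 1) * ennreal ((\<rho> / unit_vol_radius TYPE('a)) ^ DIM('a))"
    unfolding int_one by (intro add_mono mult_left_mono int_cball \<rho>0) auto
  also have "\<dots> = ennreal (measure lebesgue Om + (exp 1 - 1) * (\<rho> / unit_vol_radius TYPE('a)) ^ DIM('a))"
  proof -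
    have r0: "unit_vol_radius TYPE('a) > 0" by (rule uvr_props(1))
    have p0: "0 \<le> (\<rho> / unit_vol_radius TYPE('a)) ^ DIM('a)" using r0 \<rho>0 by simp
    show ?thesis
      by (subst ennreal_plus) (use c0 p0 in \<open>auto simp: ennreal_mult\<close>)
  qed
  finally show ?thesis unfolding \<rho>_def .
qed

lemma emM_space: "emeasure (lebesgue_on Om) (space (lebesgue_on Om)) = ennreal (measure lebesgue Om)"
  using emM_sub[of UNIV] emOm by (simp add: spM)

lemma emM_Om: "emeasure (lebesgue_on Om) Om = ennreal (measure lebesgue Om)"
  using emM_space by (simp add: spM)

lemma pair_bound:
  fixes N t0 R :: real
  assumes ij: "i < n" "j < n" "i \<noteq> j" and t0: "0 \<le> t0" "t0 \<le> 2 * R"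
  defines "A \<equiv> measure lebesgue Om"
  defines "r \<equiv> unit_vol_radius TYPE('a)"
  defines "B \<equiv> A + (exp 1 - 1) * (sqrt (R\<^sup>2 - t0\<^sup>2 / 4) / r) ^ DIM('a)"
  shows "(\<integral>\<^sup>+p. Gf t0 R N n i j p \<partial>PiM {..<n} (\<lambda>_. lebesgue_on Om))
     \<le> ennreal (A ^ (n - 2) * (A * (t0 / r) ^ DIM('a)) + exp (- (N - 2)) * (B ^ (n - 2) * (A * (2 * R / r) ^ DIM('a))))"
proof -
  let ?M = "lebesgue_on Om"
  let ?P = "PiM {..<n} (\<lambda>_. lebesgue_on Om)"
  have r0: "r > 0" unfolding r_def by (rule uvr_props(1))
  have A0: "A \<ge> 0" unfolding A_def by simp
  have c0: "exp 1 - 1 \<ge> (0::real)" using exp_ge_add_one_self[of "1::real"] by simp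
  have B0: "B \<ge> 0"
  proof -
    have "t0 * t0 \<le> (2 * R) * (2 * R)" using t0 by (intro mult_mono) auto
    then have "sqrt (R\<^sup>2 - t0\<^sup>2 / 4) \<ge> 0" by (simp add: power2_eq_square)
    then show ?thesis unfolding B_def using A0 c0 r0 by simp
  qed
  have nm[measurable]: "nearf t0 \<in> borel_measurable (?M \<Otimes>\<^sub>M ?M)"
    unfolding nearf_def[abs_def] by (rule closf_meas)
  have fm[measurable]: "farf t0 (2 * R) \<in> borel_measurable (?M \<Otimes>\<^sub>M ?M)"
    unfolding farf_def[abs_def] by (rule farf_meas)
  have om[measurable]: "onef \<in> borel_measurable (?M \<Otimes>\<^sub>M (?M \<Otimes>\<^sub>M ?M))"
    unfolding onef_def[abs_def] by simp
  have gm[measurable]: "gf R \<in> borel_measurable (?M \<Otimes>\<^sub>M (?M \<Otimes>\<^sub>M ?M))"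
    unfolding gf_def[abs_def] by (rule g_meas)
  define J where "J = {..<n} - {i, j}"
  have iin: "i \<in> {..<n}" "j \<in> {..<n}" using ij by auto
  have Jin: "l \<in> {..<n}" if "l \<in> J" for l using that by (simp add: J_def)
  have F1m: "(\<lambda>p. nearf t0 (p i, p j) * (\<Prod>l\<in>J. onef (p i, p j, p l))) \<in> borel_measurable ?P"
    using iin Jin by measurable
  have F2m: "(\<lambda>p. farf t0 (2 * R) (p i, p j) * (\<Prod>l\<in>J. gf R (p i, p j, p l))) \<in> borel_measurable ?P"
    using iin Jin by measurable
  define c where "c = ennreal (exp (- (N - 2)))"
  have "(\<integral>\<^sup>+p. Gf t0 R N n i j p \<partial>?P) = (\<integral>\<^sup>+p. nearf t0 (p i, p j) * (\<Prod>l\<in>J. onef (p i, p j, p l)) \<partial>?P)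
      + c * (\<integral>\<^sup>+p. farf t0 (2 * R) (p i, p j) * (\<Prod>l\<in>J. gf R (p i, p j, p l)) \<partial>?P)"
    unfolding Gf_def J_def[symmetric] c_def
    by (subst nn_integral_add) (use F1m F2m in \<open>auto simp: nn_integral_cmult\<close>)
  also have "(\<integral>\<^sup>+p. nearf t0 (p i, p j) * (\<Prod>l\<in>J. onef (p i, p j, p l)) \<partial>?P)
      = (\<integral>\<^sup>+x. \<integral>\<^sup>+y. nearf t0 (x, y) * (\<integral>\<^sup>+z. onef (x, y, z) \<partial>?M) ^ (n - 2) \<partial>?M \<partial>?M)"
    unfolding J_def by (rule pair_marginal[OF sfM ij nm om])
  also have "\<dots> \<le> (\<integral>\<^sup>+x. ennreal ((t0 / r) ^ DIM('a)) * ennreal A ^ (n - 2) \<partial>?M)"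
  proof (rule nn_integral_mono)
    fix x assume x: "x \<in> space ?M"
    have "(\<integral>\<^sup>+y. nearf t0 (x, y) * (\<integral>\<^sup>+z. onef (x, y, z) \<partial>?M) ^ (n - 2) \<partial>?M)
        = (\<integral>\<^sup>+y. nearf t0 (x, y) * ennreal A ^ (n - 2) \<partial>?M)"
      by (simp only: onef_def int_one A_def)
    also have "\<dots> = (\<integral>\<^sup>+y. nearf t0 (x, y) \<partial>?M) * ennreal A ^ (n - 2)"
      by (rule nn_integral_multc) (use x in measurable)
    also have "\<dots> \<le> ennreal ((t0 / r) ^ DIM('a)) * ennreal A ^ (n - 2)"
      unfolding r_def by (rule mult_right_mono[OF int_near[OF t0(1)]]) simp
    finally show "(\<integral>\<^sup>+y. nearf t0 (x, y) * (\<integral>\<^sup>+z. onef (x, y, z) \<partial>?M) ^ (n - 2) \<partial>?M)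
        \<le> ennreal ((t0 / r) ^ DIM('a)) * ennreal A ^ (n - 2)" .
  qed
  also have "\<dots> = ennreal ((t0 / r) ^ DIM('a)) * ennreal A ^ (n - 2) * ennreal A"
    by (simp add: emM_Om A_def)
  also have "(\<integral>\<^sup>+p. farf t0 (2 * R) (p i, p j) * (\<Prod>l\<in>J. gf R (p i, p j, p l)) \<partial>?P)
      = (\<integral>\<^sup>+x. \<integral>\<^sup>+y. farf t0 (2 * R) (x, y) * (\<integral>\<^sup>+z. gf R (x, y, z) \<partial>?M) ^ (n - 2) \<partial>?M \<partial>?M)"
    unfolding J_def by (rule pair_marginal[OF sfM ij fm gm])
  also have "\<dots> \<le> (\<integral>\<^sup>+x. ennreal ((2 * R / r) ^ DIM('a)) * ennreal B ^ (n - 2) \<partial>?M)"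
  proof (rule nn_integral_mono)
    fix x assume x: "x \<in> space ?M"
    have "(\<integral>\<^sup>+y. farf t0 (2 * R) (x, y) * (\<integral>\<^sup>+z. gf R (x, y, z) \<partial>?M) ^ (n - 2) \<partial>?M)
        \<le> (\<integral>\<^sup>+y. farf t0 (2 * R) (x, y) * ennreal B ^ (n - 2) \<partial>?M)"
    proof (rule nn_integral_mono)
      fix y assume y: "y \<in> space ?M"
      show "farf t0 (2 * R) (x, y) * (\<integral>\<^sup>+z. gf R (x, y, z) \<partial>?M) ^ (n - 2)
          \<le> farf t0 (2 * R) (x, y) * ennreal B ^ (n - 2)"
      proof (cases "t0 < dist x y \<and> dist x y \<le> 2 * R")
        case True
        have "(\<integral>\<^sup>+z. gf R (x, y, z) \<partial>?M) \<le> ennreal B"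
          unfolding B_def A_def r_def by (rule int_g) (use True t0 in auto)
        then show ?thesis by (intro mult_left_mono power_mono) auto
      next
        case False
        then show ?thesis by (simp add: farf_def)
      qed
    qed
    also have "\<dots> = (\<integral>\<^sup>+y. farf t0 (2 * R) (x, y) \<partial>?M) * ennreal B ^ (n - 2)"
      by (rule nn_integral_multc) (use x in measurable)
    also have "\<dots> \<le> ennreal ((2 * R / r) ^ DIM('a)) * ennreal B ^ (n - 2)"
      unfolding r_def by (rule mult_right_mono[OF int_far]) (use t0 in auto)
    finally show "(\<integral>\<^sup>+y. farf t0 (2 * R) (x, y) * (\<integral>\<^sup>+z. gf R (x, y, z) \<partial>?M) ^ (n - 2) \<partial>?M)
        \<le> ennreal ((2 * R / r) ^ DIM('a)) * ennreal B ^ (n - 2)" .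
  qed
  also have "\<dots> = ennreal ((2 * R / r) ^ DIM('a)) * ennreal B ^ (n - 2) * ennreal A"
    by (simp add: emM_Om A_def)
  finally have "(\<integral>\<^sup>+p. Gf t0 R N n i j p \<partial>?P)
     \<le> ennreal ((t0 / r) ^ DIM('a)) * ennreal A ^ (n - 2) * ennreal A
       + c * (ennreal ((2 * R / r) ^ DIM('a)) * ennreal B ^ (n - 2) * ennreal A)"
    by (simp add: add_mono mult_left_mono)
  also have "\<dots> = ennreal (A ^ (n - 2) * (A * (t0 / r) ^ DIM('a)) + exp (- (N - 2)) * (B ^ (n - 2) * (A * (2 * R / r) ^ DIM('a))))"
    using A0 B0 r0 t0 unfolding c_def
    by (simp add: ennreal_power ennreal_mult[symmetric] ennreal_plus[symmetric] mult_ac del: ennreal_plus)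
  finally show ?thesis .
qed


lemma Gf_meas:
  assumes ij: "i < n" "j < n"
  shows "(\<lambda>p. Gf t0 R N n i j p) \<in> borel_measurable (PiM {..<n} (\<lambda>_. lebesgue_on Om))"
proof -
  let ?M = "lebesgue_on Om"
  have nm[measurable]: "nearf t0 \<in> borel_measurable (?M \<Otimes>\<^sub>M ?M)"
    unfolding nearf_def[abs_def] by (rule closf_meas)
  have fm[measurable]: "farf t0 (2 * R) \<in> borel_measurable (?M \<Otimes>\<^sub>M ?M)"
    unfolding farf_def[abs_def] by (rule farf_meas)
  have om[measurable]: "onef \<in> borel_measurable (?M \<Otimes>\<^sub>M (?M \<Otimes>\<^sub>M ?M))"
    unfolding onef_def[abs_def] by simp
  have gm[measurable]: "gf R \<in> borel_measurable (?M \<Otimes>\<^sub>M (?M \<Otimes>\<^sub>M ?M))"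
    unfolding gf_def[abs_def] by (rule g_meas)
  define J where "J = {..<n} - {i, j}"
  have iin: "i \<in> {..<n}" "j \<in> {..<n}" using ij by auto
  have Jin: "l \<in> {..<n}" if "l \<in> J" for l using that by (simp add: J_def)
  show ?thesis unfolding Gf_def J_def[symmetric] using iin Jin by measurable
qed

lemma n_bound:
  fixes N t0 R :: real and n :: nat
  assumes Npos: "N > 0" and t0: "0 \<le> t0" "t0 \<le> 2 * R"
  defines "A \<equiv> measure lebesgue Om"
  defines "r \<equiv> unit_vol_radius TYPE('a)"
  defines "B \<equiv> A + (exp 1 - 1) * (sqrt (R\<^sup>2 - t0\<^sup>2 / 4) / r) ^ DIM('a)"
  defines "X \<equiv> A ^ (n - 2) * (A * (t0 / r) ^ DIM('a)) + exp (- (N - 2)) * (B ^ (n - 2) * (A * (2 * R / r) ^ DIM('a)))"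
  shows "(\<integral>\<^sup>+p. of_nat (card {x \<in> p ` {..<n}. \<exists>y \<in> p ` {..<n} - {x}. N \<le> real (card (p ` {..<n} \<inter> cball x R \<inter> cball y R))}) \<partial>PiM {..<n} (\<lambda>_. lebesgue_on Om))
     \<le> ennreal (real (n * (n - 1)) * X)"
proof -
  let ?P = "PiM {..<n} (\<lambda>_. lebesgue_on Om)"
  have r0: "r > 0" unfolding r_def by (rule uvr_props(1))
  have A0: "A \<ge> 0" unfolding A_def by simp
  have c0: "exp 1 - 1 \<ge> (0::real)" using exp_ge_add_one_self[of "1::real"] by simp
  have B0: "B \<ge> 0"
  proof -
    have "t0 * t0 \<le> (2 * R) * (2 * R)" using t0 by (intro mult_mono) auto
    then have "sqrt (R\<^sup>2 - t0\<^sup>2 / 4) \<ge> 0" by (simp add: power2_eq_square)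
    then show ?thesis unfolding B_def using A0 c0 r0 by simp
  qed
  have X0: "X \<ge> 0" unfolding X_def using A0 B0 r0 t0 by simp
  have "(\<integral>\<^sup>+p. of_nat (card {x \<in> p ` {..<n}. \<exists>y \<in> p ` {..<n} - {x}. N \<le> real (card (p ` {..<n} \<inter> cball x R \<inter> cball y R))}) \<partial>?P)
      \<le> (\<integral>\<^sup>+p. (\<Sum>i<n. \<Sum>j\<in>{..<n}-{i}. Gf t0 R N n i j p) \<partial>?P)"
    by (rule nn_integral_mono) (rule det_bound[OF Npos])
  also have "\<dots> = (\<Sum>i<n. \<Sum>j\<in>{..<n}-{i}. \<integral>\<^sup>+p. Gf t0 R N n i j p \<partial>?P)"
    by (subst nn_integral_sum) (auto intro!: borel_measurable_sum Gf_meas sum.cong nn_integral_sum)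
  also have "\<dots> \<le> (\<Sum>i<n. \<Sum>j\<in>{..<n}-{i}. ennreal X)"
    unfolding X_def A_def B_def r_def
    by (intro sum_mono pair_bound) (use t0 in auto)
  also have "\<dots> = of_nat n * (of_nat (n - 1) * ennreal X)"
    by (simp add: card_Diff_subset)
  also have "\<dots> = ennreal (real (n * (n - 1)) * X)"
    using X0 by (simp add: ennreal_of_nat_eq_real_of_nat ennreal_mult mult_ac)
  finally show ?thesis .
qed

lemma space_P_meas: "emeasure (PiM {..<n} (\<lambda>_. lebesgue_on Om)) (space (PiM {..<n} (\<lambda>_. lebesgue_on Om)))
   = ennreal ((measure lebesgue Om) ^ n)"
proof -
  interpret product_sigma_finite "\<lambda>_. lebesgue_on Om" using sfM by (simp add: product_sigma_finite_def)
  have "emeasure (PiM {..<n} (\<lambda>_. lebesgue_on Om)) (PiE {..<n} (\<lambda>_. space (lebesgue_on Om)))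
      = (\<Prod>i<n. emeasure (lebesgue_on Om) (space (lebesgue_on Om)))"
    by (rule emeasure_PiM) auto
  then show ?thesis by (simp add: space_PiM emM_Om ennreal_power)
qed

lemma rhs_n:
  "(\<integral>\<^sup>+p. of_nat (card (p ` {..<n})) \<partial>PiM {..<n} (\<lambda>_. lebesgue_on Om))
     = ennreal (real n * (measure lebesgue Om) ^ n)"
proof -
  let ?M = "lebesgue_on Om"
  let ?P = "PiM {..<n} (\<lambda>_. lebesgue_on Om)"
  have nm[measurable]: "nearf 0 \<in> borel_measurable (?M \<Otimes>\<^sub>M ?M)"
    unfolding nearf_def[abs_def] by (rule closf_meas)
  have om[measurable]: "onef \<in> borel_measurable (?M \<Otimes>\<^sub>M (?M \<Otimes>\<^sub>M ?M))"
    unfolding onef_def[abs_def] by simp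
  have pairAE: "AE p in ?P. p i \<noteq> p j" if ij: "i < n" "j < n" "i \<noteq> j" for i j
  proof -
    define J where "J = {..<n} - {i, j}"
    have iin: "i \<in> {..<n}" "j \<in> {..<n}" using ij by auto
    have Jin: "l \<in> {..<n}" if "l \<in> J" for l using that by (simp add: J_def)
    have fm: "(\<lambda>p. nearf 0 (p i, p j) * (\<Prod>l\<in>J. onef (p i, p j, p l))) \<in> borel_measurable ?P"
      using iin Jin by measurable
    have "(\<integral>\<^sup>+p. nearf 0 (p i, p j) * (\<Prod>l\<in>J. onef (p i, p j, p l)) \<partial>?P)
      = (\<integral>\<^sup>+x. \<integral>\<^sup>+y. nearf 0 (x, y) * (\<integral>\<^sup>+z. onef (x, y, z) \<partial>?M) ^ (n - 2) \<partial>?M \<partial>?M)"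
      unfolding J_def by (rule pair_marginal[OF sfM ij nm om])
    also have "\<dots> = (\<integral>\<^sup>+x. 0 \<partial>?M)"
    proof (rule nn_integral_cong)
      fix x assume x: "x \<in> space ?M"
      have "(\<integral>\<^sup>+y. nearf 0 (x, y) * (\<integral>\<^sup>+z. onef (x, y, z) \<partial>?M) ^ (n - 2) \<partial>?M)
         = (\<integral>\<^sup>+y. nearf 0 (x, y) \<partial>?M) * (\<integral>\<^sup>+z. onef (x, y, z) \<partial>?M) ^ (n - 2)"
        by (simp only: onef_def) (rule nn_integral_multc, use x in measurable)
      also have "(\<integral>\<^sup>+y. nearf 0 (x, y) \<partial>?M) = 0"
      proof -
        have "(\<integral>\<^sup>+y. nearf 0 (x, y) \<partial>?M) \<le> ennreal ((0 / unit_vol_radius TYPE('a)) ^ DIM('a))"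
          by (rule int_near) simp
        moreover have "(0::real) ^ DIM('a) = 0" by simp
        ultimately show ?thesis by simp
      qed
      finally show "(\<integral>\<^sup>+y. nearf 0 (x, y) * (\<integral>\<^sup>+z. onef (x, y, z) \<partial>?M) ^ (n - 2) \<partial>?M) = 0" by simp
    qed
    finally have "(\<integral>\<^sup>+p. nearf 0 (p i, p j) * (\<Prod>l\<in>J. onef (p i, p j, p l)) \<partial>?P) = 0" by simp
    then have "AE p in ?P. nearf 0 (p i, p j) * (\<Prod>l\<in>J. onef (p i, p j, p l)) = 0"
      using nn_integral_0_iff_AE[OF fm] by simp
    then show ?thesis by eventually_elim (simp add: nearf_def onef_def indicator_def)
  qed
  have "AE p in ?P. \<forall>ij\<in>{ij. fst ij < n \<and> snd ij < n \<and> fst ij \<noteq> snd ij}. p (fst ij) \<noteq> p (snd ij)"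
  proof (rule AE_finite_allI)
    show "finite {ij. fst ij < n \<and> snd ij < n \<and> fst ij \<noteq> snd ij}"
      by (rule finite_subset[of _ "{..<n} \<times> {..<n}"]) auto
  qed (use pairAE in auto)
  then have "AE p in ?P. of_nat (card (p ` {..<n})) = (of_nat n :: ennreal)"
  proof eventually_elim
    case (elim p)
    then have "inj_on p {..<n}" unfolding inj_on_def by force
    then show ?case by (simp add: card_image)
  qed
  then have "(\<integral>\<^sup>+p. of_nat (card (p ` {..<n})) \<partial>?P) = (\<integral>\<^sup>+p. of_nat n \<partial>?P)"
    by (rule nn_integral_cong_AE)
  also have "\<dots> = of_nat n * ennreal ((measure lebesgue Om) ^ n)"
    using space_P_meas by simp
  also have "\<dots> = ennreal (real n * (measure lebesgue Om) ^ n)"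
    by (simp add: ennreal_of_nat_eq_real_of_nat ennreal_mult)
  finally show ?thesis .
qed

end

lemma exp_sums_real: "(\<lambda>m. x ^ m / fact m) sums exp (x::real)"
  using exp_converges[of x] by (simp add: divide_inverse_commute scaleR_conv_of_real)

lemma ser2: "(\<lambda>n. lam ^ n / fact n * real (n * (n - 1)) * z ^ (n - 2)) sums (lam\<^sup>2 * exp (lam * (z::real)))"
proof -
  define f where "f n = lam ^ n / fact n * real (n * (n - 1)) * z ^ (n - 2)" for n
  have "(\<lambda>m. lam\<^sup>2 * ((lam * z) ^ m / fact m)) sums (lam\<^sup>2 * exp (lam * z))"
    by (rule sums_mult) (rule exp_sums_real)
  moreover have "f (m + 2) = lam\<^sup>2 * ((lam * z) ^ m / fact m)" for m
  proof -
    define C where "C = real ((m + 2) * (m + 1))"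
    have C0: "C > 0" unfolding C_def by (simp del: of_nat_mult add: of_nat_0_less_iff)
    have fa: "fact (m + 2) = C * (fact m :: real)"
      unfolding C_def by (simp add: fact_Suc algebra_simps numeral_2_eq_2)
    have nn: "real ((m + 2) * (m + 2 - 1)) = C" unfolding C_def by simp
    have "f (m + 2) = lam ^ (m + 2) / (C * fact m) * C * z ^ m" unfolding f_def fa nn by simp
    also have "\<dots> = lam ^ (m + 2) * z ^ m / fact m" using C0 by (simp add: field_simps)
    also have "\<dots> = lam\<^sup>2 * ((lam * z) ^ m / fact m)" by (simp add: power_add power_mult_distrib mult_ac power2_eq_square)
    finally show ?thesis .
  qed
  ultimately have "(\<lambda>m. f (m + 2)) sums (lam\<^sup>2 * exp (lam * z))" by simp
  then have "f sums (lam\<^sup>2 * exp (lam * z) + sum f {..<2})" by (subst sums_iff_shift[symmetric]) simp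
  moreover have "sum f {..<2} = 0" by (simp add: f_def numeral_2_eq_2)
  ultimately show ?thesis unfolding f_def by simp
qed

lemma ser1: "(\<lambda>n. lam ^ n / fact n * real n * z ^ n) sums (lam * z * exp (lam * (z::real)))"
proof -
  define f where "f n = lam ^ n / fact n * real n * z ^ n" for n
  have "(\<lambda>m. (lam * z) * ((lam * z) ^ m / fact m)) sums (lam * z * exp (lam * z))"
    by (rule sums_mult) (rule exp_sums_real)
  moreover have "f (m + 1) = (lam * z) * ((lam * z) ^ m / fact m)" for m
  proof -
    have "f (m + 1) = lam ^ (m + 1) / (real (m + 1) * fact m) * real (m + 1) * z ^ (m + 1)"
      unfolding f_def by (simp add: fact_Suc)
    also have "\<dots> = lam ^ (m + 1) * z ^ (m + 1) / fact m" by (simp add: field_simps del: of_nat_Suc)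
    also have "\<dots> = (lam * z) * ((lam * z) ^ m / fact m)" by (simp add: power_mult_distrib mult_ac)
    finally show ?thesis .
  qed
  ultimately have "(\<lambda>m. f (m + 1)) sums (lam * z * exp (lam * z))" by simp
  then have "f sums (lam * z * exp (lam * z) + sum f {..<1})" by (subst sums_iff_shift[symmetric]) simp
  then show ?thesis unfolding f_def by simp
qed

theorem lemma2p4:
  fixes Om :: "'a::euclidean_space set"
    and d :: nat and lam Delta eta r :: real
  assumes "d = DIM('a)" and "d \<ge> 1000"
    and "bounded Om" and "Om \<in> sets lebesgue"
    and "lam = (sqrt d / (8 * ln d)) ^ d"
    and "Delta = 2 ^ d * lam"
    and "eta = exp (- ((ln (real d))\<^sup>2 / 8))"
    and "r = unit_vol_radius TYPE('a)"
  shows "ppp_expect lam Om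
           (\<lambda>X. of_nat (card {x \<in> X. \<exists>y \<in> X - {x}.
                  real (card (X \<inter> cball x (2 * r) \<inter> cball y (2 * r))) \<ge> eta * Delta}))
         \<le> ennreal (1 / (2 * d)) * ppp_expect lam Om (\<lambda>X. of_nat (card X))"
proof -
  note dd = assms(1) and d1000 = assms(2) and bOm = assms(3) and mOm = assms(4)
  define L where "L = ln (real d)"
  define q where "q = sqrt (real d) / (8 * L)"
  define u where "u = 3 * L / sqrt (real d)"
  have lamq: "lam = q ^ d" unfolding q_def L_def using assms(5) by simp
  have etaL: "eta = exp (- (L\<^sup>2 / 8))" unfolding L_def using assms(7) by simp
  note num = numeric[OF d1000, folded L_def, folded q_def u_def, folded etaL lamq, folded assms(6)]
  have r0: "r > 0" unfolding assms(8) by (rule uvr_props(1))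
  have dpos: "real d > 0" using d1000 by simp
  have lam0: "lam > 0"
  proof -
    have "L > 0" unfolding L_def using d1000 by simp
    then have "q > 0" unfolding q_def using dpos by simp
    then show ?thesis unfolding lamq by simp
  qed
  define A where "A = measure lebesgue Om"
  have A0: "A \<ge> 0" unfolding A_def by simp
  define R where "R = 2 * r"
  define t0 where "t0 = u * r"
  define N where "N = eta * Delta"
  have N0: "N > 0" unfolding N_def assms(6) etaL using lam0 by simp
  have t00: "0 \<le> t0" unfolding t0_def using num(1) r0 by simp
  have t0R: "t0 \<le> 2 * R" unfolding t0_def R_def using num(2) r0 by simp
  define V where "V = sqrt (4 - u\<^sup>2 / 4) ^ d"
  define B where "B = A + (exp 1 - 1) * V"
  have Beq: "B = A + (exp 1 - 1) * (sqrt (R\<^sup>2 - t0\<^sup>2 / 4) / r) ^ DIM('a)"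
  proof -
    have "R\<^sup>2 - t0\<^sup>2 / 4 = r\<^sup>2 * (4 - u\<^sup>2 / 4)" unfolding R_def t0_def by (simp add: power_mult_distrib algebra_simps)
    then have "sqrt (R\<^sup>2 - t0\<^sup>2 / 4) = r * sqrt (4 - u\<^sup>2 / 4)" using r0 by (simp add: real_sqrt_mult)
    then show ?thesis unfolding B_def V_def dd[symmetric] using r0 by simp
  qed
  have aeq: "(t0 / r) ^ DIM('a) = u ^ d" unfolding t0_def dd[symmetric] using r0 by simp
  have beq: "(2 * R / r) ^ DIM('a) = 4 ^ d" unfolding R_def dd[symmetric] using r0 by simp
  define X where "X n = A ^ (n - 2) * (A * u ^ d) + exp (- (N - 2)) * (B ^ (n - 2) * (A * 4 ^ d))" for n :: nat
  define c where "c n = exp (- lam * A) * lam ^ n / fact n" for n :: nat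
  have c0: "c n \<ge> 0" for n unfolding c_def using lam0 by simp
  have e1: "exp 1 - 1 \<ge> (0::real)" using exp_ge_add_one_self[of "1::real"] by simp
  have V0: "V \<ge> 0"
  proof -
    have "u * u \<le> 4 * 4" using num(1,2) by (intro mult_mono) auto
    then show ?thesis unfolding V_def by (simp add: power2_eq_square)
  qed
  have B0: "B \<ge> 0" unfolding B_def using A0 e1 V0 by simp
  have X0: "X n \<ge> 0" for n unfolding X_def using A0 B0 num(1) by (intro add_nonneg_nonneg mult_nonneg_nonneg) auto
  have In: "(\<integral>\<^sup>+p. of_nat (card {x \<in> p ` {..<n}. \<exists>y \<in> p ` {..<n} - {x}.
                  real (card (p ` {..<n} \<inter> cball x (2 * r) \<inter> cball y (2 * r))) \<ge> eta * Delta}) \<partial>PiM {..<n} (\<lambda>_. restrict_space lebesgue Om))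
        \<le> ennreal (real (n * (n - 1)) * X n)" for n
  proof -
    note h = n_bound[OF bOm mOm N0 t00 t0R, of n]
    note h2 = h[unfolded A_def[symmetric] assms(8)[symmetric], folded Beq, unfolded aeq beq, folded X_def]
    show ?thesis using h2 unfolding N_def R_def .
  qed
  have "ppp_expect lam Om
           (\<lambda>X. of_nat (card {x \<in> X. \<exists>y \<in> X - {x}.
                  real (card (X \<inter> cball x (2 * r) \<inter> cball y (2 * r))) \<ge> eta * Delta}))
      \<le> (\<Sum>n. ennreal (c n * (real (n * (n - 1)) * X n)))"
    unfolding ppp_expect_def A_def[symmetric] c_def[symmetric]
  proof (rule suminf_le)
    fix n
    show "ennreal (c n) * (\<integral>\<^sup>+p. of_nat (card {x \<in> p ` {..<n}. \<exists>y \<in> p ` {..<n} - {x}.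
                  real (card (p ` {..<n} \<inter> cball x (2 * r) \<inter> cball y (2 * r))) \<ge> eta * Delta}) \<partial>PiM {..<n} (\<lambda>_. restrict_space lebesgue Om))
        \<le> ennreal (c n * (real (n * (n - 1)) * X n))"
    proof -
      have e: "ennreal (c n) * ennreal (real (n * (n - 1)) * X n) = ennreal (c n * (real (n * (n - 1)) * X n))"
        using c0[of n] X0[of n] by (simp add: ennreal_mult)
      show ?thesis using mult_left_mono[OF In[of n], of "ennreal (c n)"] unfolding e by simp
    qed
  qed (rule summableI)+
  also have "(\<Sum>n. ennreal (c n * (real (n * (n - 1)) * X n)))
     = ennreal (exp (- lam * A) * (lam\<^sup>2 * exp (lam * A) * (A * u ^ d) + exp (- (N - 2)) * (A * 4 ^ d) * (lam\<^sup>2 * exp (lam * B))))"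
  proof (rule suminf_ennreal_eq)
    show "0 \<le> c n * (real (n * (n - 1)) * X n)" for n using c0[of n] X0[of n] by simp
    have "(\<lambda>n. exp (- lam * A) * ((lam ^ n / fact n * real (n * (n - 1)) * A ^ (n - 2)) * (A * u ^ d)
        + exp (- (N - 2)) * (A * 4 ^ d) * (lam ^ n / fact n * real (n * (n - 1)) * B ^ (n - 2))))
      sums (exp (- lam * A) * (lam\<^sup>2 * exp (lam * A) * (A * u ^ d) + exp (- (N - 2)) * (A * 4 ^ d) * (lam\<^sup>2 * exp (lam * B))))"
      by (intro sums_mult sums_add sums_mult2 ser2)
    moreover have "exp (- lam * A) * ((lam ^ n / fact n * real (n * (n - 1)) * A ^ (n - 2)) * (A * u ^ d)
        + exp (- (N - 2)) * (A * 4 ^ d) * (lam ^ n / fact n * real (n * (n - 1)) * B ^ (n - 2)))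
        = c n * (real (n * (n - 1)) * X n)" for n
      unfolding c_def X_def by (simp add: algebra_simps)
    ultimately show "(\<lambda>n. c n * (real (n * (n - 1)) * X n))
      sums (exp (- lam * A) * (lam\<^sup>2 * exp (lam * A) * (A * u ^ d) + exp (- (N - 2)) * (A * 4 ^ d) * (lam\<^sup>2 * exp (lam * B))))"
      by simp
  qed
  also have "\<dots> \<le> ennreal (1 / (2 * d) * (lam * A))"
  proof (rule ennreal_leI)
    have ex1: "exp (- lam * A) * exp (lam * A) = 1" by (simp add: mult_exp_exp)
    have ex2: "exp (- lam * A) * exp (lam * B) = exp (lam * (exp 1 - 1) * V)"
      unfolding B_def by (simp add: mult_exp_exp algebra_simps)
    have eqS: "exp (- lam * A) * (lam\<^sup>2 * exp (lam * A) * (A * u ^ d) + exp (- (N - 2)) * (A * 4 ^ d) * (lam\<^sup>2 * exp (lam * B)))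
      = (lam * A) * (lam * u ^ d) + (lam * A) * (lam * 4 ^ d * (exp (- (N - 2)) * exp (lam * (exp 1 - 1) * V)))"
      using ex1 ex2 by (simp add: power2_eq_square algebra_simps)
    have eb: "exp (- (N - 2)) * exp (lam * (exp 1 - 1) * V) \<le> exp (2 - N / 2)"
    proof -
      have "lam * (exp 1 - 1) * V \<le> N / 2" using num(4) unfolding V_def N_def .
      then have "- (N - 2) + lam * (exp 1 - 1) * V \<le> 2 - N / 2" by simp
      then show ?thesis by (simp add: mult_exp_exp)
    qed
    have "(lam * A) * (lam * 4 ^ d * (exp (- (N - 2)) * exp (lam * (exp 1 - 1) * V)))
        \<le> (lam * A) * (lam * 4 ^ d * exp (2 - N / 2))"
      using eb lam0 A0 by (intro mult_left_mono) auto
    also have "\<dots> \<le> (lam * A) * (1 / (4 * real d))"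
      using num(5) lam0 A0 unfolding N_def by (intro mult_left_mono) (auto simp: mult.assoc)
    finally have t2: "(lam * A) * (lam * 4 ^ d * (exp (- (N - 2)) * exp (lam * (exp 1 - 1) * V))) \<le> (lam * A) * (1 / (4 * real d))" .
    have t1: "(lam * A) * (lam * u ^ d) \<le> (lam * A) * (1 / (4 * real d))"
      using num(3) lam0 A0 by (intro mult_left_mono) auto
    have "(lam * A) * (lam * u ^ d) + (lam * A) * (lam * 4 ^ d * (exp (- (N - 2)) * exp (lam * (exp 1 - 1) * V)))
       \<le> (lam * A) * (1 / (4 * real d)) + (lam * A) * (1 / (4 * real d))" using t1 t2 by linarith
    also have "\<dots> = 1 / (2 * d) * (lam * A)" by (simp add: field_simps)
    finally show "exp (- lam * A) * (lam\<^sup>2 * exp (lam * A) * (A * u ^ d) + exp (- (N - 2)) * (A * 4 ^ d) * (lam\<^sup>2 * exp (lam * B)))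
        \<le> 1 / (2 * d) * (lam * A)" unfolding eqS .
  qed
  also have "\<dots> = ennreal (1 / (2 * d)) * ennreal (lam * A)"
    using lam0 A0 by (intro ennreal_mult) auto
  also have "ennreal (lam * A) = ppp_expect lam Om (\<lambda>X. of_nat (card X))"
  proof -
    have "ppp_expect lam Om (\<lambda>X. of_nat (card X)) = (\<Sum>n. ennreal (c n * (real n * A ^ n)))"
      unfolding ppp_expect_def A_def[symmetric] c_def[symmetric]
    proof (rule suminf_cong)
      fix n
      have "(\<integral>\<^sup>+p. of_nat (card (p ` {..<n})) \<partial>PiM {..<n} (\<lambda>_. restrict_space lebesgue Om)) = ennreal (real n * A ^ n)"
        unfolding A_def by (rule rhs_n[OF bOm mOm])
      then show "ennreal (c n) * (\<integral>\<^sup>+p. of_nat (card (p ` {..<n})) \<partial>PiM {..<n} (\<lambda>_. restrict_space lebesgue Om))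
          = ennreal (c n * (real n * A ^ n))"
        using c0[of n] A0 by (simp add: ennreal_mult)
    qed
    also have "\<dots> = ennreal (lam * A)"
    proof (rule suminf_ennreal_eq)
      show "0 \<le> c n * (real n * A ^ n)" for n using c0[of n] A0 by simp
      have s: "(\<lambda>n. exp (- lam * A) * (lam ^ n / fact n * real n * A ^ n)) sums (exp (- lam * A) * (lam * A * exp (lam * A)))"
        by (intro sums_mult ser1)
      have ex: "exp (- lam * A) * exp (lam * A) = 1" by (simp add: mult_exp_exp)
      have e1: "exp (- lam * A) * (lam * A * exp (lam * A)) = lam * A"
      proof -
        have "exp (- lam * A) * (lam * A * exp (lam * A)) = lam * A * (exp (- lam * A) * exp (lam * A))"
          by (simp only: mult_ac)
        then show ?thesis using ex by simp
      qed
      have e2: "(\<lambda>n. exp (- lam * A) * (lam ^ n / fact n * real n * A ^ n)) = (\<lambda>n. c n * (real n * A ^ n))"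
        by (rule ext) (simp add: c_def algebra_simps)
      show "(\<lambda>n. c n * (real n * A ^ n)) sums (lam * A)" using s unfolding e1 e2 .
    qed
    finally show ?thesis by simp
  qed
  finally show ?thesis .
qed

end
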